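(* Let $\mathcal{G}$ be an additive arithmetical semigroup satisfying Axiom $A^{\#}$ (constants $c_{\mathcal{G}}>0$, $q>1$, $0\le\eta<1$) with norm $\|g\|=q^{\partial(g)}$. For integers $n,m\ge0$ let $$R(n,m)=\sum_{\substack{0\le\partial(g)\le n\\ d_-(g)>m}}\frac{\mu(g)}{\|g\|}.$$ Then $R(n,m)=O(1)$ uniformly for all $n,m\ge0$.
   Context: An additive arithmetical semigroup is a commutative monoid $\mathcal{G}$ (written additively, identity $e_{\mathcal{G}}$) freely generated by a countable set $\mathcal{P}$ of primes, with an additive degree map $\partial\colon\mathcal{G}\to\mathbb{Z}_{\ge0}$, $\partial(e_{\mathcal{G}})=0$, $\partial(P)>0$ for primes, finitely many elements of each degree. Axiom $A^{\#}$: $\#\{g:\partial(g)=n\}=c_{\mathcal{G}}q^n+O(q^{\eta n})$. $P\mid g$ means $g=P+r$. $d_-(g)=\min\{\partial(P):P\mid g\}$ for $g\ne e_{\mathcal{G}}$, and $e_{\mathcal{G}}$ is included in the sum defining $R(n,m)$ (convention $d_-(e_{\mathcal{G}})=\infty$). $\mu$ is the Möbius function on $\mathcal{G}$. *)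

theory Defs
  imports Complex_Main "HOL-Library.Multiset" "HOL-Library.Extended_Nat"
begin

text \<open>An additive arithmetical semigroup is the free commutative monoid on a set of
primes; we model it as finite multisets over a type 'p of primes, with a degree
map on primes extended additively.\<close>

definition gdeg :: "('p \<Rightarrow> nat) \<Rightarrow> 'p multiset \<Rightarrow> nat" where
  "gdeg deg g = (\<Sum>P\<in>#g. deg P)"

definition gnorm :: "('p \<Rightarrow> nat) \<Rightarrow> real \<Rightarrow> 'p multiset \<Rightarrow> real" where
  "gnorm deg q g = q ^ gdeg deg g"

definition gmu :: "'p multiset \<Rightarrow> int" where
  "gmu g = (if \<forall>P. count g P \<le> 1 then (-1) ^ size g else 0)"

definition d_minus :: "('p \<Rightarrow> nat) \<Rightarrow> 'p multiset \<Rightarrow> enat" where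
  "d_minus deg g = (if g = {#} then \<infinity> else enat (Min (deg ` set_mset g)))"

definition arith_semigroup :: "('p \<Rightarrow> nat) \<Rightarrow> bool" where
  "arith_semigroup deg \<longleftrightarrow> (\<forall>P. deg P > 0) \<and> (\<forall>n. finite {g :: 'p multiset. gdeg deg g = n})"

definition axiom_A_sharp :: "('p \<Rightarrow> nat) \<Rightarrow> real \<Rightarrow> real \<Rightarrow> real \<Rightarrow> bool" where
  "axiom_A_sharp deg c q \<eta> \<longleftrightarrow> c > 0 \<and> q > 1 \<and> 0 \<le> \<eta> \<and> \<eta> < 1 \<and>
     (\<exists>C. \<forall>n::nat. \<bar>real (card {g :: 'p multiset. gdeg deg g = n}) - c * q ^ n\<bar> \<le> C * q powr (\<eta> * n))"

definition R_sum :: "('p \<Rightarrow> nat) \<Rightarrow> real \<Rightarrow> nat \<Rightarrow> nat \<Rightarrow> real" where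
  "R_sum deg q n m = (\<Sum>g\<in>{g :: 'p multiset. gdeg deg g \<le> n \<and> d_minus deg g > enat m}.
      real_of_int (gmu g) / gnorm deg q g)"

end

theory Submission
  imports Defs
begin

lemma gdeg_plus: "gdeg deg (a + b) = gdeg deg a + gdeg deg b"
  unfolding gdeg_def by simp

lemma gdeg_mono: "a \<subseteq># b \<Longrightarrow> gdeg deg a \<le> gdeg deg b"
  by (metis gdeg_plus le_add1 subset_mset.add_diff_inverse)

lemma d_minus_gt: "(d_minus deg h > enat m) \<longleftrightarrow> (\<forall>P\<in>#h. m < deg P)"
proof (cases "h = {#}")
  case True then show ?thesis by (simp add: d_minus_def)
next
  case False
  then have "finite (deg ` set_mset h)" "deg ` set_mset h \<noteq> {}" by auto
  then show ?thesis using False by (simp add: d_minus_def Min_gr_iff)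
qed

lemma gmu_mset_set: "finite X \<Longrightarrow> gmu (mset_set X) = (-1) ^ card X"
  unfolding gmu_def by (simp add: count_mset_set')

lemma sqfree_eq:
  assumes "\<forall>P. count h P \<le> 1" shows "h = mset_set (set_mset h)"
proof (rule multiset_eqI)
  fix x
  have le: "count h x \<le> 1" using assms by blast
  show "count h x = count (mset_set (set_mset h)) x"
  proof (cases "x \<in># h")
    case True
    then have "count h x > 0" by (simp add: count_greater_zero_iff)
    with le have "count h x = 1" by linarith
    with True show ?thesis by (simp add: count_mset_set')
  next
    case False
    then show ?thesis by (simp add: count_mset_set' not_in_iff)
  qed
qed

lemma mu_sum:
  fixes g :: "'p multiset"
  assumes fin: "finite {h. h \<subseteq># g \<and> (\<forall>P\<in>#h. r P)}"
  shows "(\<Sum>h\<in>{h. h \<subseteq># g \<and> (\<forall>P\<in>#h. r P)}. real_of_int (gmu h)) = (if \<forall>P\<in>#g. \<not> r P then 1 else 0)"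
proof -
  define D where "D = {h. h \<subseteq># g \<and> (\<forall>P\<in>#h. r P)}"
  define A where "A = {P. P \<in># g \<and> r P}"
  have finA: "finite A" unfolding A_def by (rule finite_subset[of _ "set_mset g"]) auto
  have sub: "mset_set ` Pow A \<subseteq> D"
  proof
    fix h assume "h \<in> mset_set ` Pow A"
    then obtain X where X: "X \<subseteq> A" "h = mset_set X" by auto
    have fX: "finite X" using X finA finite_subset by blast
    have "h \<subseteq># g"
      unfolding X(2) by (rule mset_subset_eqI) (use X fX in \<open>auto simp: count_mset_set' A_def Suc_le_eq\<close>)
    moreover have "\<forall>P\<in>#h. r P" using X fX by (auto simp: A_def)
    ultimately show "h \<in> D" by (simp add: D_def)
  qed
  have zero: "\<forall>h\<in>D - mset_set ` Pow A. real_of_int (gmu h) = 0"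
  proof
    fix h assume h: "h \<in> D - mset_set ` Pow A"
    show "real_of_int (gmu h) = 0"
    proof (rule ccontr)
      assume "real_of_int (gmu h) \<noteq> 0"
      then have c: "\<forall>P. count h P \<le> 1" by (auto simp: gmu_def split: if_splits)
      have "set_mset h \<subseteq> A" using h by (auto simp: D_def A_def dest: mset_subset_eqD)
      then have "h \<in> mset_set ` Pow A" using sqfree_eq[OF c] by blast
      with h show False by blast
    qed
  qed
  have "(\<Sum>h\<in>D. real_of_int (gmu h)) = (\<Sum>h\<in>mset_set ` Pow A. real_of_int (gmu h))"
    by (rule sum.mono_neutral_left[symmetric]) (use fin sub zero in \<open>auto simp: D_def\<close>)
  also have "\<dots> = (\<Sum>X\<in>Pow A. real_of_int (gmu (mset_set X)))"
  proof (rule sum.reindex[unfolded comp_def])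
    show "inj_on mset_set (Pow A)"
      by (rule inj_onI) (metis PowD finA finite_subset finite_set_mset_mset_set)
  qed
  also have "\<dots> = (\<Sum>X\<in>Pow A. (-1) ^ card X * (\<Prod>x\<in>X. (1::real)) * (\<Prod>x\<in>A-X. 1))"
    by (rule sum.cong) (auto simp: gmu_mset_set finite_subset[OF _ finA])
  also have "\<dots> = (\<Prod>x\<in>A. (1::real) - 1)"
    by (rule prod_diff_conv_sum[symmetric]) (rule finA)
  also have "\<dots> = (if A = {} then 1 else 0)" using finA by auto
  also have "(A = {}) = (\<forall>P\<in>#g. \<not> r P)" by (auto simp: A_def)
  finally show ?thesis by (simp add: D_def)
qed


lemma swap_identity:
  fixes deg :: "'p \<Rightarrow> nat" and f :: "'p multiset \<Rightarrow> real"
  assumes fin: "\<And>j. finite {g :: 'p multiset. gdeg deg g = j}"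
    and finS: "finite S"
    and S_def: "S = {h. gdeg deg h \<le> n \<and> r h}"
    and rsub: "\<And>h g. h \<subseteq># g \<Longrightarrow> r g \<Longrightarrow> r h"
  shows "(\<Sum>g\<in>{g. gdeg deg g = n}. \<Sum>h\<in>{h. h \<subseteq># g \<and> r h}. f h)
       = (\<Sum>h\<in>S. f h * real (card {k. gdeg deg k = n - gdeg deg h}))"
proof -
  define T where "T j = {g :: 'p multiset. gdeg deg g = j}" for j
  define D where "D g = {h. h \<subseteq># g \<and> r h}" for g
  have finD: "finite (D g)" if "g \<in> T n" for g
    by (rule finite_subset[OF _ finS]) (use that gdeg_mono in \<open>force simp: D_def T_def S_def\<close>)
  have "(\<Sum>g\<in>T n. \<Sum>h\<in>D g. f h) = (\<Sum>(g,h)\<in>Sigma (T n) D. f h)"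
    by (rule sum.Sigma) (use fin finD in \<open>auto simp: T_def\<close>)
  also have "\<dots> = (\<Sum>(h,k)\<in>Sigma S (\<lambda>h. T (n - gdeg deg h)). f h)"
  proof (rule sum.reindex_bij_witness[where i = "\<lambda>(h,k). (h+k, h)" and j = "\<lambda>(g,h). (h, g - h)"])
    fix a assume "a \<in> Sigma (T n) D"
    then obtain g h where a: "a = (g,h)" "gdeg deg g = n" "h \<subseteq># g" "r h"
      by (auto simp: T_def D_def)
    have e: "h + (g - h) = g" using a(3) by (simp add: subset_mset.add_diff_inverse)
    have "gdeg deg g = gdeg deg h + gdeg deg (g - h)" by (metis e gdeg_plus)
    with a e show "(case case a of (g, h) \<Rightarrow> (h, g - h) of (h, k) \<Rightarrow> (h + k, h)) = a"
      and "(case a of (g, h) \<Rightarrow> (h, g - h)) \<in> Sigma S (\<lambda>h. T (n - gdeg deg h))"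
      and "(case case a of (g, h) \<Rightarrow> (h, g - h) of (h, k) \<Rightarrow> f h) = (case a of (g, h) \<Rightarrow> f h)"
      by (auto simp: S_def T_def)
  next
    fix b assume "b \<in> Sigma S (\<lambda>h. T (n - gdeg deg h))"
    then obtain h k where b: "b = (h,k)" "gdeg deg h \<le> n" "r h" "gdeg deg k = n - gdeg deg h"
      by (auto simp: S_def T_def)
    show "(case case b of (h, k) \<Rightarrow> (h + k, h) of (g, h) \<Rightarrow> (h, g - h)) = b"
      using b by simp
    show "(case b of (h, k) \<Rightarrow> (h + k, h)) \<in> Sigma (T n) D"
      using b by (simp add: T_def D_def gdeg_plus)
  qed
  also have "\<dots> = (\<Sum>h\<in>S. \<Sum>k\<in>T (n - gdeg deg h). f h)"
    by (rule sum.Sigma[symmetric]) (use fin finS in \<open>auto simp: T_def\<close>)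
  also have "\<dots> = (\<Sum>h\<in>S. f h * real (card (T (n - gdeg deg h))))"
    by (simp add: mult.commute)
  finally show ?thesis by (simp add: T_def D_def)
qed


theorem lemma2p7:
  fixes deg :: "'p \<Rightarrow> nat" and c q \<eta> :: real
  assumes "arith_semigroup deg"
    and "axiom_A_sharp deg c q \<eta>"
  shows "\<exists>B. \<forall>n m. \<bar>R_sum deg q n m\<bar> \<le> B"
proof -
  define T where "T j = {g :: 'p multiset. gdeg deg g = j}" for j
  define G where "G j = real (card (T j))" for j
  have fin: "\<And>j. finite (T j)" using assms(1) by (simp add: arith_semigroup_def T_def)
  have c0: "c > 0" and q1: "q > 1" and eta: "0 \<le> \<eta>" "\<eta> < 1" using assms(2) by (auto simp: axiom_A_sharp_def)
  obtain C where hC: "\<And>j::nat. \<bar>G j - c * q ^ j\<bar> \<le> C * q powr (\<eta> * j)"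
    using assms(2) unfolding axiom_A_sharp_def G_def T_def by blast
  have C0': "\<bar>G 0 - c\<bar> \<le> C" using hC[of 0] q1 by simp
  have C0: "C \<ge> 0" using C0' by linarith
  define \<rho> where "\<rho> = q powr \<eta> / q"
  have rho0: "\<rho> > 0" using q1 by (simp add: \<rho>_def)
  have rho1: "\<rho> < 1"
  proof -
    have "q powr \<eta> < q powr 1" using q1 eta by (intro powr_less_mono) auto
    then show ?thesis using q1 by (simp add: \<rho>_def)
  qed
  have e_bound: "\<bar>G j / q ^ j - c\<bar> \<le> C * \<rho> ^ j" for j
  proof -
    have qp: "q powr (\<eta> * j) = (q powr \<eta>) ^ j" using q1
      by (metis powr_powr powr_realpow powr_gt_zero less_trans zero_less_one mult.commute)
    have "\<bar>G j / q ^ j - c\<bar> = \<bar>G j - c * q ^ j\<bar> / q ^ j" using q1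
      by (simp add: field_simps abs_div_pos flip: abs_divide) 
    also have "\<dots> \<le> C * q powr (\<eta> * j) / q ^ j" using q1 hC[of j] by (simp add: divide_right_mono)
    also have "\<dots> = C * \<rho> ^ j" by (simp add: qp \<rho>_def power_divide)
    finally show ?thesis .
  qed
  have G_bound: "G j / q ^ j \<le> c + C" for j
  proof -
    have "\<rho> ^ j \<le> 1" using rho0 rho1 by (simp add: power_le_one)
    then have "C * \<rho> ^ j \<le> C" using C0 by (simp add: mult_left_le)
    then show ?thesis using e_bound[of j] by linarith
  qed
  define K where "K = (c + C) * C / (1 - \<rho>)"
  have geo: "(\<Sum>j\<le>n. \<rho> ^ (n - j)) \<le> 1 / (1 - \<rho>)" for n
  proof -
    have "(\<Sum>j\<le>n. \<rho> ^ (n - j)) = (\<Sum>i<Suc n. \<rho> ^ (Suc n - Suc i))"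
      by (simp add: lessThan_Suc_atMost)
    also have "\<dots> = (\<Sum>i<Suc n. \<rho> ^ i)" by (rule sum.nat_diff_reindex)
    also have "\<dots> = (1 - \<rho> ^ Suc n) / (1 - \<rho>)" using rho1
      by (simp add: geometric_sum) (simp add: field_simps)
    also have "\<dots> \<le> 1 / (1 - \<rho>)" using rho0 rho1 by (simp add: divide_right_mono)
    finally show ?thesis .
  qed
  have main: "\<bar>R_sum deg q n m\<bar> \<le> ((c + C) + K) / c" for n m
  proof -
    define S where "S = {g :: 'p multiset. gdeg deg g \<le> n \<and> d_minus deg g > enat m}"
    define U where "U = {g :: 'p multiset. gdeg deg g \<le> n}"
    have U_eq: "U = (\<Union>j\<in>{..n}. T j)" by (auto simp: U_def T_def)
    have finU: "finite U" unfolding U_eq using fin by auto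
    have finS: "finite S" by (rule finite_subset[OF _ finU]) (auto simp: S_def U_def)
    define f where "f h = real_of_int (gmu h) / q ^ gdeg deg h" for h :: "'p multiset"
    have R_eq: "R_sum deg q n m = (\<Sum>h\<in>S. f h)"
      by (simp add: R_sum_def S_def f_def gnorm_def)
    have rsub: "d_minus deg h > enat m" if "h \<subseteq># g" "d_minus deg g > enat m" for h g
      using that by (auto simp: d_minus_gt dest: mset_subset_eqD)
    have ident: "(\<Sum>g\<in>T n. \<Sum>h\<in>{h. h \<subseteq># g \<and> d_minus deg h > enat m}. real_of_int (gmu h))
       = (\<Sum>h\<in>S. real_of_int (gmu h) * G (n - gdeg deg h))"
      unfolding T_def G_def
      by (rule swap_identity[where r = "\<lambda>h. d_minus deg h > enat m"])
         (use fin finS rsub in \<open>auto simp: T_def S_def\<close>)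
    have inner: "\<bar>\<Sum>h\<in>{h. h \<subseteq># g \<and> d_minus deg h > enat m}. real_of_int (gmu h)\<bar> \<le> 1"
      if "g \<in> T n" for g
    proof -
      have "finite {h. h \<subseteq># g \<and> (\<forall>P\<in>#h. m < deg P)}"
        by (rule finite_subset[OF _ finS]) (use that gdeg_mono in \<open>force simp: S_def T_def d_minus_gt\<close>)
      from mu_sum[OF this] show ?thesis by (simp add: d_minus_gt)
    qed
    have LHS: "\<bar>\<Sum>g\<in>T n. \<Sum>h\<in>{h. h \<subseteq># g \<and> d_minus deg h > enat m}. real_of_int (gmu h)\<bar> \<le> G n"
    proof -
      have "\<bar>\<Sum>g\<in>T n. \<Sum>h\<in>{h. h \<subseteq># g \<and> d_minus deg h > enat m}. real_of_int (gmu h)\<bar>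
          \<le> (\<Sum>g\<in>T n. \<bar>\<Sum>h\<in>{h. h \<subseteq># g \<and> d_minus deg h > enat m}. real_of_int (gmu h)\<bar>)"
        by (rule sum_abs)
      also have "\<dots> \<le> (\<Sum>g\<in>T n. 1)" by (rule sum_mono) (rule inner)
      finally show ?thesis by (simp add: G_def)
    qed
    define e where "e j = G j / q ^ j - c" for j
    have split: "(\<Sum>h\<in>S. real_of_int (gmu h) * G (n - gdeg deg h)) / q ^ n
        = c * (\<Sum>h\<in>S. f h) + (\<Sum>h\<in>S. f h * e (n - gdeg deg h))"
    proof -
      have "(\<Sum>h\<in>S. real_of_int (gmu h) * G (n - gdeg deg h)) / q ^ n
          = (\<Sum>h\<in>S. f h * (c + e (n - gdeg deg h)))"
        unfolding sum_divide_distrib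
      proof (rule sum.cong[OF refl])
        fix h assume "h \<in> S"
        then have le: "gdeg deg h \<le> n" by (simp add: S_def)
        have qn: "q ^ n = q ^ gdeg deg h * q ^ (n - gdeg deg h)"
          using le by (simp flip: power_add)
        show "real_of_int (gmu h) * G (n - gdeg deg h) / q ^ n = f h * (c + e (n - gdeg deg h))"
          using q1 by (simp add: qn f_def e_def)
      qed
      also have "\<dots> = c * (\<Sum>h\<in>S. f h) + (\<Sum>h\<in>S. f h * e (n - gdeg deg h))"
        by (simp add: algebra_simps sum.distrib sum_distrib_left)
      finally show ?thesis .
    qed
    have err: "\<bar>\<Sum>h\<in>S. f h * e (n - gdeg deg h)\<bar> \<le> K"
    proof -
      define \<phi> where "\<phi> j = C * \<rho> ^ (n - j) / q ^ j" for j
      have phi0: "\<phi> j \<ge> 0" for j using C0 rho0 q1 by (simp add: \<phi>_def)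
      have "\<bar>\<Sum>h\<in>S. f h * e (n - gdeg deg h)\<bar> \<le> (\<Sum>h\<in>S. \<bar>f h * e (n - gdeg deg h)\<bar>)"
        by (rule sum_abs)
      also have "\<dots> \<le> (\<Sum>h\<in>S. \<phi> (gdeg deg h))"
      proof (rule sum_mono)
        fix h assume "h \<in> S"
        have fh: "\<bar>f h\<bar> \<le> 1 / q ^ gdeg deg h" using q1
          by (auto simp: f_def gmu_def abs_divide)
        have "\<bar>f h * e (n - gdeg deg h)\<bar> = \<bar>f h\<bar> * \<bar>e (n - gdeg deg h)\<bar>" by (simp add: abs_mult)
        also have "\<dots> \<le> (1 / q ^ gdeg deg h) * (C * \<rho> ^ (n - gdeg deg h))"
          by (rule mult_mono) (use fh e_bound q1 in \<open>auto simp: e_def\<close>)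
        finally show "\<bar>f h * e (n - gdeg deg h)\<bar> \<le> \<phi> (gdeg deg h)" by (simp add: \<phi>_def)
      qed
      also have "\<dots> \<le> (\<Sum>h\<in>U. \<phi> (gdeg deg h))"
        by (rule sum_mono2[OF finU]) (auto simp: S_def U_def phi0)
      also have "\<dots> = (\<Sum>j\<in>{..n}. \<Sum>h\<in>{h\<in>U. gdeg deg h = j}. \<phi> (gdeg deg h))"
        by (rule sum.group[symmetric]) (use finU in \<open>auto simp: U_def\<close>)
      also have "\<dots> = (\<Sum>j\<in>{..n}. G j * \<phi> j)"
      proof (rule sum.cong[OF refl])
        fix j assume "j \<in> {..n}"
        then have "{h\<in>U. gdeg deg h = j} = T j" by (auto simp: U_def T_def)
        then show "(\<Sum>h\<in>{h\<in>U. gdeg deg h = j}. \<phi> (gdeg deg h)) = G j * \<phi> j"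
          by (simp add: G_def T_def)
      qed
      also have "\<dots> \<le> (\<Sum>j\<in>{..n}. ((c + C) * C) * \<rho> ^ (n - j))"
      proof (rule sum_mono)
        fix j
        have "G j * \<phi> j = (G j / q ^ j) * (C * \<rho> ^ (n - j))" by (simp add: \<phi>_def)
        also have "\<dots> \<le> (c + C) * (C * \<rho> ^ (n - j))"
          by (rule mult_right_mono[OF G_bound]) (use C0 rho0 in auto)
        finally show "G j * \<phi> j \<le> ((c + C) * C) * \<rho> ^ (n - j)" by simp
      qed
      also have "\<dots> = ((c + C) * C) * (\<Sum>j\<le>n. \<rho> ^ (n - j))" by (simp add: sum_distrib_left)
      also have "\<dots> \<le> ((c + C) * C) * (1 / (1 - \<rho>))"
        by (rule mult_left_mono[OF geo]) (use c0 C0 in auto)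
      finally show ?thesis by (simp add: K_def)
    qed
    have Gn: "G n / q ^ n \<le> c + C" by (rule G_bound)
    have "\<bar>(\<Sum>h\<in>S. real_of_int (gmu h) * G (n - gdeg deg h)) / q ^ n\<bar> \<le> G n / q ^ n"
      using LHS ident q1 by (simp add: abs_divide divide_right_mono)
    then have "\<bar>c * (\<Sum>h\<in>S. f h)\<bar> \<le> (c + C) + K" using split err Gn by linarith
    then have "c * \<bar>\<Sum>h\<in>S. f h\<bar> \<le> (c + C) + K" using c0 by (simp add: abs_mult)
    then show ?thesis using c0 R_eq by (simp add: field_simps)
  qed
  then show ?thesis by blast
qed

end
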